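(* Let $G$ be a finite abelian group, $\Phi$ a normalized $3$-cocycle on $G$, and suppose $\{g_1,\dots,g_n\}\subseteq G$ generates $G$ and $\widetilde{\Phi}_{g_i}(g_j,g_k)=\widetilde{\Phi}_{g_i}(g_k,g_j)$ for all $1\le i,j,k\le n$. Then $\Phi$ is an abelian $3$-cocycle on $G$.
   Context: $\mathbbm{k}$ is algebraically closed of characteristic zero; $\Phi$ takes values in $\mathbbm{k}^*$. For $g\in G$, $\widetilde{\Phi}_g(x,y)=\frac{\Phi(g,x,y)\Phi(x,y,g)}{\Phi(x,g,y)}$. The category ${}^{\mathbbm{k}G}_{\mathbbm{k}G}\mathcal{YD}^{\Phi}$ has objects the $G$-graded vector spaces $V=\bigoplus_gV_g$ with operators $e\triangleright-$ preserving each $V_g$, $1\triangleright v=v$, $e\triangleright(f\triangleright v)=\widetilde{\Phi}_g(e,f)(ef)\triangleright v$ for $v\in V_g$. $\Phi$ is abelian if every simple object of ${}^{\mathbbm{k}G}_{\mathbbm{k}G}\mathcal{YD}^{\Phi}$ is $1$-dimensional. *)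

theory Defs
  imports Complex_Main "HOL-Algebra.Generated_Groups" "HOL-Computational_Algebra.Polynomial"
begin

definition alg_closed :: "'k::field itself \<Rightarrow> bool" where
  "alg_closed _ \<longleftrightarrow> (\<forall>p :: 'k poly. degree p \<ge> 1 \<longrightarrow> (\<exists>x. poly p x = 0))"

definition normalized_3cocycle ::
  "('g, 'b) monoid_scheme \<Rightarrow> ('g \<Rightarrow> 'g \<Rightarrow> 'g \<Rightarrow> 'k::field) \<Rightarrow> bool" where
  "normalized_3cocycle G \<Phi> \<longleftrightarrow>
     (\<forall>x\<in>carrier G. \<forall>y\<in>carrier G. \<forall>z\<in>carrier G. \<Phi> x y z \<noteq> 0) \<and>
     (\<forall>e\<in>carrier G. \<forall>f\<in>carrier G. \<forall>g\<in>carrier G. \<forall>h\<in>carrier G.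
        \<Phi> (e \<otimes>\<^bsub>G\<^esub> f) g h * \<Phi> e f (g \<otimes>\<^bsub>G\<^esub> h)
        = \<Phi> e f g * \<Phi> e (f \<otimes>\<^bsub>G\<^esub> g) h * \<Phi> f g h) \<and>
     (\<forall>x\<in>carrier G. \<forall>y\<in>carrier G.
        \<Phi> \<one>\<^bsub>G\<^esub> x y = 1 \<and> \<Phi> x \<one>\<^bsub>G\<^esub> y = 1 \<and> \<Phi> x y \<one>\<^bsub>G\<^esub> = 1)"

definition tPhi :: "('g, 'b) monoid_scheme \<Rightarrow> ('g \<Rightarrow> 'g \<Rightarrow> 'g \<Rightarrow> 'k::field) \<Rightarrow> 'g \<Rightarrow> 'g \<Rightarrow> 'g \<Rightarrow> 'k" where
  "tPhi G \<Phi> g x y = \<Phi> g x y * \<Phi> x y g / \<Phi> x g y"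

text \<open>Internal direct sum of the graded pieces Vg g (g in G) inside an ambient
  k-vector space given by scale.\<close>
definition graded_sum ::
  "('g, 'b) monoid_scheme \<Rightarrow> ('g \<Rightarrow> 'v::ab_group_add set) \<Rightarrow> 'v set" where
  "graded_sum G Vg = {(\<Sum>g\<in>carrier G. f g) | f. \<forall>g\<in>carrier G. f g \<in> Vg g}"

definition graded_independent ::
  "('g, 'b) monoid_scheme \<Rightarrow> ('g \<Rightarrow> 'v::ab_group_add set) \<Rightarrow> bool" where
  "graded_independent G Vg \<longleftrightarrow>
     (\<forall>f. (\<forall>g\<in>carrier G. f g \<in> Vg g) \<longrightarrow> (\<Sum>g\<in>carrier G. f g) = 0 \<longrightarrow> (\<forall>g\<in>carrier G. f g = 0))"

text \<open>An object of the category of Yetter-Drinfeld modules over kG twisted by Phi: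
  a G-graded vector space V = direct sum of Vg g, with linear operators act e preserving
  each Vg g, act 1 = id, and act e (act f v) = tPhi_g(e,f) (act (ef) v) for v in Vg g.\<close>
definition yd_obj ::
  "('k::field \<Rightarrow> 'v::ab_group_add \<Rightarrow> 'v) \<Rightarrow> ('g, 'b) monoid_scheme \<Rightarrow> ('g \<Rightarrow> 'g \<Rightarrow> 'g \<Rightarrow> 'k)
    \<Rightarrow> 'v set \<Rightarrow> ('g \<Rightarrow> 'v set) \<Rightarrow> ('g \<Rightarrow> 'v \<Rightarrow> 'v) \<Rightarrow> bool" where
  "yd_obj scale G \<Phi> V Vg act \<longleftrightarrow>
     (\<forall>g\<in>carrier G. module.subspace scale (Vg g)) \<and>
     V = graded_sum G Vg \<and> graded_independent G Vg \<and>
     (\<forall>e\<in>carrier G. \<forall>x\<in>V. \<forall>y\<in>V. act e (x + y) = act e x + act e y) \<and>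
     (\<forall>e\<in>carrier G. \<forall>c. \<forall>x\<in>V. act e (scale c x) = scale c (act e x)) \<and>
     (\<forall>e\<in>carrier G. \<forall>g\<in>carrier G. \<forall>v\<in>Vg g. act e v \<in> Vg g) \<and>
     (\<forall>v\<in>V. act \<one>\<^bsub>G\<^esub> v = v) \<and>
     (\<forall>g\<in>carrier G. \<forall>e\<in>carrier G. \<forall>f\<in>carrier G. \<forall>v\<in>Vg g.
        act e (act f v) = scale (tPhi G \<Phi> g e f) (act (e \<otimes>\<^bsub>G\<^esub> f) v))"

definition yd_subobj ::
  "('k::field \<Rightarrow> 'v::ab_group_add \<Rightarrow> 'v) \<Rightarrow> ('g, 'b) monoid_scheme
    \<Rightarrow> 'v set \<Rightarrow> ('g \<Rightarrow> 'v set) \<Rightarrow> ('g \<Rightarrow> 'v \<Rightarrow> 'v) \<Rightarrow> 'v set \<Rightarrow> bool" where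
  "yd_subobj scale G V Vg act W \<longleftrightarrow>
     module.subspace scale W \<and> W \<subseteq> V \<and>
     W = graded_sum G (\<lambda>g. W \<inter> Vg g) \<and>
     (\<forall>e\<in>carrier G. \<forall>w\<in>W. act e w \<in> W)"

definition yd_simple ::
  "('k::field \<Rightarrow> 'v::ab_group_add \<Rightarrow> 'v) \<Rightarrow> ('g, 'b) monoid_scheme \<Rightarrow> ('g \<Rightarrow> 'g \<Rightarrow> 'g \<Rightarrow> 'k)
    \<Rightarrow> 'v set \<Rightarrow> ('g \<Rightarrow> 'v set) \<Rightarrow> ('g \<Rightarrow> 'v \<Rightarrow> 'v) \<Rightarrow> bool" where
  "yd_simple scale G \<Phi> V Vg act \<longleftrightarrow>
     yd_obj scale G \<Phi> V Vg act \<and> V \<noteq> {0} \<and>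
     (\<forall>W. yd_subobj scale G V Vg act W \<longrightarrow> W = {0} \<or> W = V)"

text \<open>Phi is abelian: every simple object (realised inside the k-vector space given
  by scale) is 1-dimensional.\<close>
definition abelian_cocycle ::
  "('k::field \<Rightarrow> 'v::ab_group_add \<Rightarrow> 'v) \<Rightarrow> ('g, 'b) monoid_scheme \<Rightarrow> ('g \<Rightarrow> 'g \<Rightarrow> 'g \<Rightarrow> 'k) \<Rightarrow> bool" where
  "abelian_cocycle scale G \<Phi> \<longleftrightarrow>
     (\<forall>V Vg act. yd_simple scale G \<Phi> V Vg act \<longrightarrow> vector_space.dim scale V = 1)"

end

theory Submission
  imports Defs "HOL-Algebra.Multiplicative_Group"
begin

lemma (in comm_group) omega_mult:
  fixes \<Phi> :: "'a \<Rightarrow> 'a \<Rightarrow> 'a \<Rightarrow> 'k::field"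
  assumes C: "normalized_3cocycle G \<Phi>"
    and gc: "g \<in> carrier G" and hc: "h \<in> carrier G" and xc: "x \<in> carrier G" and yc: "y \<in> carrier G"
  shows "tPhi G \<Phi> (g \<otimes> h) x y * tPhi G \<Phi> g y x * tPhi G \<Phi> h y x
       = tPhi G \<Phi> (g \<otimes> h) y x * tPhi G \<Phi> g x y * tPhi G \<Phi> h x y"
proof -
  have cc: "\<And>e f k l. e \<in> carrier G \<Longrightarrow> f \<in> carrier G \<Longrightarrow> k \<in> carrier G \<Longrightarrow> l \<in> carrier G \<Longrightarrow>
     \<Phi> (e \<otimes> f) k l * \<Phi> e f (k \<otimes> l) = \<Phi> e f k * \<Phi> e (f \<otimes> k) l * \<Phi> f k l"
    using C unfolding normalized_3cocycle_def by blast
  have nz: "\<And>a b c. a \<in> carrier G \<Longrightarrow> b \<in> carrier G \<Longrightarrow> c \<in> carrier G \<Longrightarrow> \<Phi> a b c \<noteq> 0"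
    using C unfolding normalized_3cocycle_def by blast
  have comms: "h \<otimes> g = g \<otimes> h" "x \<otimes> g = g \<otimes> x" "y \<otimes> g = g \<otimes> y"
    "x \<otimes> h = h \<otimes> x" "y \<otimes> h = h \<otimes> y" "y \<otimes> x = x \<otimes> y"
    using gc hc xc yc by (simp_all add: m_comm)
  have e1: "(\<Phi> (x \<otimes> y) g h) * (\<Phi> y x (g \<otimes> h)) = (\<Phi> y x g) * (\<Phi> y (g \<otimes> x) h) * (\<Phi> x g h)"
    using cc[OF yc xc gc hc] unfolding comms .
  have e2: "(\<Phi> (g \<otimes> y) x h) * (\<Phi> y g (h \<otimes> x)) = (\<Phi> y g x) * (\<Phi> y (g \<otimes> x) h) * (\<Phi> g x h)"
    using cc[OF yc gc xc hc] unfolding comms .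
  have e3: "(\<Phi> (g \<otimes> y) x h) * (\<Phi> g y (h \<otimes> x)) = (\<Phi> g y x) * (\<Phi> g (x \<otimes> y) h) * (\<Phi> y x h)"
    using cc[OF gc yc xc hc] unfolding comms .
  have e4: "(\<Phi> (g \<otimes> y) h x) * (\<Phi> g y (h \<otimes> x)) = (\<Phi> g y h) * (\<Phi> g (h \<otimes> y) x) * (\<Phi> y h x)"
    using cc[OF gc yc hc xc] unfolding comms .
  have e5: "(\<Phi> (g \<otimes> h) y x) * (\<Phi> g h (x \<otimes> y)) = (\<Phi> g h y) * (\<Phi> g (h \<otimes> y) x) * (\<Phi> h y x)"
    using cc[OF gc hc yc xc] unfolding comms .
  have e6: "(\<Phi> (g \<otimes> y) h x) * (\<Phi> y g (h \<otimes> x)) = (\<Phi> y g h) * (\<Phi> y (g \<otimes> h) x) * (\<Phi> g h x)"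
    using cc[OF yc gc hc xc] unfolding comms .
  have e7: "(\<Phi> (x \<otimes> y) g h) * (\<Phi> x y (g \<otimes> h)) = (\<Phi> x y g) * (\<Phi> x (g \<otimes> y) h) * (\<Phi> y g h)"
    using cc[OF xc yc gc hc] unfolding comms .
  have e8: "(\<Phi> (g \<otimes> x) y h) * (\<Phi> x g (h \<otimes> y)) = (\<Phi> x g y) * (\<Phi> x (g \<otimes> y) h) * (\<Phi> g y h)"
    using cc[OF xc gc yc hc] unfolding comms .
  have e9: "(\<Phi> (g \<otimes> x) h y) * (\<Phi> x g (h \<otimes> y)) = (\<Phi> x g h) * (\<Phi> x (g \<otimes> h) y) * (\<Phi> g h y)"
    using cc[OF xc gc hc yc] unfolding comms .
  have e10: "(\<Phi> (g \<otimes> h) x y) * (\<Phi> g h (x \<otimes> y)) = (\<Phi> g h x) * (\<Phi> g (h \<otimes> x) y) * (\<Phi> h x y)"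
    using cc[OF gc hc xc yc] unfolding comms .
  have e11: "(\<Phi> (g \<otimes> x) h y) * (\<Phi> g x (h \<otimes> y)) = (\<Phi> g x h) * (\<Phi> g (h \<otimes> x) y) * (\<Phi> x h y)"
    using cc[OF gc xc hc yc] unfolding comms .
  have e12: "(\<Phi> (g \<otimes> x) y h) * (\<Phi> g x (h \<otimes> y)) = (\<Phi> g x y) * (\<Phi> g (x \<otimes> y) h) * (\<Phi> x y h)"
    using cc[OF gc xc yc hc] unfolding comms .
  have M: "((\<Phi> (g \<otimes> h) x y) * (\<Phi> x y (g \<otimes> h)) * (\<Phi> g y x) * (\<Phi> y x g) * (\<Phi> h y x) * (\<Phi> y x h)) * ((\<Phi> y (g \<otimes> h) x) * (\<Phi> x g y) * (\<Phi> x h y)) * ((\<Phi> (x \<otimes> y) g h) * (\<Phi> y x (g \<otimes> h))) * ((\<Phi> y g x) * (\<Phi> y (g \<otimes> x) h) * (\<Phi> g x h)) * ((\<Phi> (g \<otimes> y) x h) * (\<Phi> g y (h \<otimes> x))) * ((\<Phi> g y h) * (\<Phi> g (h \<otimes> y) x) * (\<Phi> y h x)) * ((\<Phi> (g \<otimes> h) y x) * (\<Phi> g h (x \<otimes> y))) * ((\<Phi> (g \<otimes> y) h x) * (\<Phi> y g (h \<otimes> x))) * ((\<Phi> x y g) * (\<Phi> x (g \<otimes> y) h) * (\<Phi> y g h)) * ((\<Phi> (g \<otimes> x) y h) * (\<Phi> x g (h \<otimes> y))) * ((\<Phi> x g h) * (\<Phi> x (g \<otimes> h) y) * (\<Phi>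 g h y)) * ((\<Phi> g h x) * (\<Phi> g (h \<otimes> x) y) * (\<Phi> h x y)) * ((\<Phi> (g \<otimes> x) h y) * (\<Phi> g x (h \<otimes> y))) * ((\<Phi> g x y) * (\<Phi> g (x \<otimes> y) h) * (\<Phi> x y h)) = ((\<Phi> (g \<otimes> h) y x) * (\<Phi> y x (g \<otimes> h)) * (\<Phi> g x y) * (\<Phi> x y g) * (\<Phi> h x y) * (\<Phi> x y h)) * ((\<Phi> x (g \<otimes> h) y) * (\<Phi> y g x) * (\<Phi> y h x)) * ((\<Phi> y x g) * (\<Phi> y (g \<otimes> x) h) * (\<Phi> x g h)) * ((\<Phi> (g \<otimes> y) x h) * (\<Phi> y g (h \<otimes> x))) * ((\<Phi> g y x) * (\<Phi> g (x \<otimes> y) h) * (\<Phi> y x h)) * ((\<Phi> (g \<otimes> y) h x) * (\<Phi> g y (h \<otimes> x))) * ((\<Phi> g h y) * (\<Phi> g (h \<otimes> y) x) * (\<Phi> h y x)) * ((\<Phi> y g h) * (\<Phi> y (g \<otimes> h) x) * (\<Phi> g h x)) * ((\<Phi> (x \<otimes> y) g h) * (\<Phi> x y (g \<otimes> h))) * ((\<Phi> x g y) * (\<Phi> x (g \<otimes> y) h) * (\<Phi> g y h)) * ((\<Phi> (g \<otimes> x) h y) * (\<Phi> x g (h \<otimes> y))) * ((\<Phi> (g \<otimes> h) x y) * (\<Phi> g h (x \<otimes> y))) * ((\<Phi> g x h) * (\<Phi> g (h \<otimes> x) y) * (\<Phi> x h y)) * ((\<Phi> (g \<otimes> x) y h)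 * (\<Phi> g x (h \<otimes> y)))"
    by (simp only: mult_ac)
  have M2: "((\<Phi> (g \<otimes> h) x y) * (\<Phi> x y (g \<otimes> h)) * (\<Phi> g y x) * (\<Phi> y x g) * (\<Phi> h y x) * (\<Phi> y x h) * (\<Phi> y (g \<otimes> h) x) * (\<Phi> x g y) * (\<Phi> x h y)) * (((\<Phi> y x g) * (\<Phi> y (g \<otimes> x) h) * (\<Phi> x g h)) * ((\<Phi> y g x) * (\<Phi> y (g \<otimes> x) h) * (\<Phi> g x h)) * ((\<Phi> g y x) * (\<Phi> g (x \<otimes> y) h) * (\<Phi> y x h)) * ((\<Phi> g y h) * (\<Phi> g (h \<otimes> y) x) * (\<Phi> y h x)) * ((\<Phi> g h y) * (\<Phi> g (h \<otimes> y) x) * (\<Phi> h y x)) * ((\<Phi> y g h) * (\<Phi> y (g \<otimes> h) x) * (\<Phi> g h x)) * ((\<Phi> x y g) * (\<Phi> x (g \<otimes> y) h) * (\<Phi> y g h)) * ((\<Phi> x g y) * (\<Phi> x (g \<otimes> y) h) * (\<Phi> g y h)) * ((\<Phi> x g h) * (\<Phi> x (g \<otimes> h) y) * (\<Phi> g h y)) * ((\<Phi> g h x) * (\<Phi> g (h \<otimes> x) y) * (\<Phi> h x y)) * ((\<Phi> g x h) * (\<Phi> g (h \<otimes> x) y) * (\<Phi> x h y)) * ((\<Phi> g x y) * (\<Phi> g (x \<otimes> y) h) * (\<Phi> x y h))) = ((\<Phi> (g \<otimes> h) y x) * (\<Phi> y x (g \<otimes> h)) * (\<Phi> g x y) * (\<Phi>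 x y g) * (\<Phi> h x y) * (\<Phi> x y h) * (\<Phi> x (g \<otimes> h) y) * (\<Phi> y g x) * (\<Phi> y h x)) * (((\<Phi> y x g) * (\<Phi> y (g \<otimes> x) h) * (\<Phi> x g h)) * ((\<Phi> y g x) * (\<Phi> y (g \<otimes> x) h) * (\<Phi> g x h)) * ((\<Phi> g y x) * (\<Phi> g (x \<otimes> y) h) * (\<Phi> y x h)) * ((\<Phi> g y h) * (\<Phi> g (h \<otimes> y) x) * (\<Phi> y h x)) * ((\<Phi> g h y) * (\<Phi> g (h \<otimes> y) x) * (\<Phi> h y x)) * ((\<Phi> y g h) * (\<Phi> y (g \<otimes> h) x) * (\<Phi> g h x)) * ((\<Phi> x y g) * (\<Phi> x (g \<otimes> y) h) * (\<Phi> y g h)) * ((\<Phi> x g y) * (\<Phi> x (g \<otimes> y) h) * (\<Phi> g y h)) * ((\<Phi> x g h) * (\<Phi> x (g \<otimes> h) y) * (\<Phi> g h y)) * ((\<Phi> g h x) * (\<Phi> g (h \<otimes> x) y) * (\<Phi> h x y)) * ((\<Phi> g x h) * (\<Phi> g (h \<otimes> x) y) * (\<Phi> x h y)) * ((\<Phi> g x y) * (\<Phi> g (x \<otimes> y) h) * (\<Phi> x y h)))"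
    using M unfolding e1 e2 e3 e4 e5 e6 e7 e8 e9 e10 e11 e12 by (simp only: mult_ac)
  have Qnz: "((\<Phi> y x g) * (\<Phi> y (g \<otimes> x) h) * (\<Phi> x g h)) * ((\<Phi> y g x) * (\<Phi> y (g \<otimes> x) h) * (\<Phi> g x h)) * ((\<Phi> g y x) * (\<Phi> g (x \<otimes> y) h) * (\<Phi> y x h)) * ((\<Phi> g y h) * (\<Phi> g (h \<otimes> y) x) * (\<Phi> y h x)) * ((\<Phi> g h y) * (\<Phi> g (h \<otimes> y) x) * (\<Phi> h y x)) * ((\<Phi> y g h) * (\<Phi> y (g \<otimes> h) x) * (\<Phi> g h x)) * ((\<Phi> x y g) * (\<Phi> x (g \<otimes> y) h) * (\<Phi> y g h)) * ((\<Phi> x g y) * (\<Phi> x (g \<otimes> y) h) * (\<Phi> g y h)) * ((\<Phi> x g h) * (\<Phi> x (g \<otimes> h) y) * (\<Phi> g h y)) * ((\<Phi> g h x) * (\<Phi> g (h \<otimes> x) y) * (\<Phi> h x y)) * ((\<Phi> g x h) * (\<Phi> g (h \<otimes> x) y) * (\<Phi> x h y)) * ((\<Phi> g x y) * (\<Phi> g (x \<otimes> y) h) * (\<Phi> x y h)) \<noteq> 0"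
    by (simp add: nz gc hc xc yc)
  have M3: "(\<Phi> (g \<otimes> h) x y) * (\<Phi> x y (g \<otimes> h)) * (\<Phi> g y x) * (\<Phi> y x g) * (\<Phi> h y x) * (\<Phi> y x h) * (\<Phi> y (g \<otimes> h) x) * (\<Phi> x g y) * (\<Phi> x h y) = (\<Phi> (g \<otimes> h) y x) * (\<Phi> y x (g \<otimes> h)) * (\<Phi> g x y) * (\<Phi> x y g) * (\<Phi> h x y) * (\<Phi> x y h) * (\<Phi> x (g \<otimes> h) y) * (\<Phi> y g x) * (\<Phi> y h x)"
    using M2 Qnz by simp
  show ?thesis
    unfolding tPhi_def using M3 by (simp add: nz gc hc xc yc field_simps)
qed


lemma (in comm_group) omega_gen:
  fixes \<Phi> :: "'a \<Rightarrow> 'a \<Rightarrow> 'a \<Rightarrow> 'k::field"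
  assumes C: "normalized_3cocycle G \<Phi>" and H: "H \<subseteq> carrier G"
    and sym: "\<forall>a\<in>H. \<forall>b\<in>H. \<forall>c\<in>H. tPhi G \<Phi> a b c = tPhi G \<Phi> a c b"
    and k: "k \<in> generate G H" and a: "a \<in> H" and b: "b \<in> H"
  shows "tPhi G \<Phi> k a b = tPhi G \<Phi> k b a"
proof -
  have nz: "\<And>a b c. a \<in> carrier G \<Longrightarrow> b \<in> carrier G \<Longrightarrow> c \<in> carrier G \<Longrightarrow> \<Phi> a b c \<noteq> 0"
    using C unfolding normalized_3cocycle_def by blast
  have norm: "\<And>x y. x \<in> carrier G \<Longrightarrow> y \<in> carrier G \<Longrightarrow>
      \<Phi> \<one> x y = 1 \<and> \<Phi> x \<one> y = 1 \<and> \<Phi> x y \<one> = 1"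
    using C unfolding normalized_3cocycle_def by blast
  have tP1: "\<And>x y. x \<in> carrier G \<Longrightarrow> y \<in> carrier G \<Longrightarrow> tPhi G \<Phi> \<one> x y = 1"
    unfolding tPhi_def using norm by simp
  have tPnz: "\<And>k x y. k \<in> carrier G \<Longrightarrow> x \<in> carrier G \<Longrightarrow> y \<in> carrier G \<Longrightarrow> tPhi G \<Phi> k x y \<noteq> 0"
    unfolding tPhi_def using nz by simp
  have ac: "a \<in> carrier G" and bc: "b \<in> carrier G" using a b H by auto
  show ?thesis
    using k
  proof (induction k rule: generate.induct)
    case one
    then show ?case using tP1 ac bc by simp
  next
    case (incl h)
    then show ?case using sym a b by blast
  next
    case (inv h)
    have hc: "h \<in> carrier G" using inv H by auto
    have ic: "inv h \<in> carrier G" using hc by simp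
    have e: "tPhi G \<Phi> (h \<otimes> inv h) a b * tPhi G \<Phi> h b a * tPhi G \<Phi> (inv h) b a
       = tPhi G \<Phi> (h \<otimes> inv h) b a * tPhi G \<Phi> h a b * tPhi G \<Phi> (inv h) a b"
      by (rule omega_mult[OF C hc ic ac bc])
    have s: "tPhi G \<Phi> h a b = tPhi G \<Phi> h b a" using sym inv a b by blast
    show ?case using e s tPnz[OF hc ac bc] hc tP1 ac bc by simp
  next
    case (eng h1 h2)
    have c1: "h1 \<in> carrier G" and c2: "h2 \<in> carrier G"
      using eng.hyps generate_in_carrier[OF H] by auto
    have e: "tPhi G \<Phi> (h1 \<otimes> h2) a b * tPhi G \<Phi> h1 b a * tPhi G \<Phi> h2 b a
       = tPhi G \<Phi> (h1 \<otimes> h2) b a * tPhi G \<Phi> h1 a b * tPhi G \<Phi> h2 a b"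
      by (rule omega_mult[OF C c1 c2 ac bc])
    show ?case using e eng.IH tPnz[OF c1 ac bc] tPnz[OF c2 ac bc] by simp
  qed
qed
lemma eigen_exists:
  fixes scale :: "'k::field \<Rightarrow> 'v::ab_group_add \<Rightarrow> 'v" and T :: "'v \<Rightarrow> 'v"
  assumes ac: "alg_closed TYPE('k)" and vs: "vector_space scale"
    and sV: "module.subspace scale V" and nV: "V \<noteq> {0}"
    and Tin: "\<And>w. w \<in> V \<Longrightarrow> T w \<in> V"
    and Tadd: "\<And>x y. x \<in> V \<Longrightarrow> y \<in> V \<Longrightarrow> T (x + y) = T x + T y"
    and Tsc: "\<And>c x. x \<in> V \<Longrightarrow> T (scale c x) = scale c (T x)"
    and n: "n \<ge> 1" and Tn: "\<And>w. w \<in> V \<Longrightarrow> (T ^^ n) w = scale lam w"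
  shows "\<exists>r. \<exists>w\<in>V. w \<noteq> 0 \<and> T w = scale r w"
proof -
  interpret vector_space scale by (rule vs)
  define PO where "PO p w = (\<Sum>i<Suc (degree p). scale (Polynomial.coeff p i) ((T ^^ i) w))" for p :: "'k poly" and w
  have Tpow: "(T ^^ i) w \<in> V" if "w \<in> V" for i w
    using that by (induction i) (auto intro: Tin)
  have z: "0 \<in> V" using sV subspace_0 by blast
  have T0: "T 0 = 0"
    using Tadd[OF z z] by simp
  have Tsum: "T (sum u A) = (\<Sum>i\<in>A. T (u i))" if "finite A" "\<And>i. i \<in> A \<Longrightarrow> u i \<in> V" for A u
    using that
  proof (induction A rule: finite_induct)
    case empty then show ?case by (simp add: T0)
  next
    case (insert a A)
    have "sum u A \<in> V" using insert by (intro subspace_sum[OF sV]) auto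
    then show ?case using insert by (simp add: Tadd)
  qed
  have bound: "PO p w = (\<Sum>i<N. scale (Polynomial.coeff p i) ((T ^^ i) w))" if "degree p < N" for p w N
    unfolding PO_def
    by (rule sum.mono_neutral_left) (use that in \<open>auto simp: coeff_eq_0\<close>)
  have POin: "PO p w \<in> V" if "w \<in> V" for p w
    unfolding PO_def using that by (intro subspace_sum[OF sV] subspace_scale[OF sV] Tpow)
  have POlin: "PO ([:-r, 1:] * q) w = T (PO q w) - scale r (PO q w)" if w: "w \<in> V" for q r w
  proof -
    define N where "N = Suc (Suc (degree q))"
    have dg: "degree ([:-r, 1:] * q) < N"
      unfolding N_def using degree_mult_le[of "[:-r, 1:]" q] by simp
    have "PO ([:-r, 1:] * q) w = (\<Sum>i<N. scale (Polynomial.coeff ([:-r, 1:] * q) i) ((T ^^ i) w))"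
      by (rule bound[OF dg])
    also have "\<dots> = (\<Sum>i<N. scale (- r) (scale (Polynomial.coeff q i) ((T ^^ i) w)))
        + (\<Sum>i<N. scale (Polynomial.coeff (pCons 0 q) i) ((T ^^ i) w))"
      by (simp add: sum.distrib[symmetric] scale_left_diff_distrib)
    also have "(\<Sum>i<N. scale (- r) (scale (Polynomial.coeff q i) ((T ^^ i) w))) = scale (- r) (PO q w)"
      using bound[of q N w] by (simp only: N_def scale_sum_right)
    also have "(\<Sum>i<N. scale (Polynomial.coeff (pCons 0 q) i) ((T ^^ i) w))
        = (\<Sum>i<Suc (degree q). scale (Polynomial.coeff q i) ((T ^^ Suc i) w))"
      unfolding N_def by (subst sum.lessThan_Suc_shift) simp
    also have "\<dots> = (\<Sum>i<Suc (degree q). T (scale (Polynomial.coeff q i) ((T ^^ i) w)))"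
      by (simp add: Tsc Tpow w)
    also have "\<dots> = T (PO q w)"
      unfolding PO_def by (rule Tsum[symmetric]) (auto intro: subspace_scale[OF sV] Tpow w)
    finally show ?thesis by (simp add: scale_minus_left)
  qed
  have POc: "PO [:c:] w = scale c w" for c w
    unfolding PO_def by simp
  obtain w1 where w1: "w1 \<in> V" "w1 \<noteq> 0" using nV z by blast
  have main: "\<forall>p. degree p = d \<longrightarrow> p \<noteq> 0 \<longrightarrow> (\<forall>w\<in>V. PO p w = 0) \<longrightarrow> (\<exists>r. \<exists>w\<in>V. w \<noteq> 0 \<and> T w = scale r w)" for d
  proof (induction d rule: less_induct)
    case (less d)
    show ?case
    proof (intro allI impI)
      fix p :: "'k poly"
      assume dp: "degree p = d" and p0: "p \<noteq> 0" and ann: "\<forall>w\<in>V. PO p w = 0"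
      show "\<exists>r. \<exists>w\<in>V. w \<noteq> 0 \<and> T w = scale r w"
      proof (cases "d = 0")
        case True
        then have "p = [:Polynomial.coeff p 0:]" using dp by (metis degree_0_id)
        moreover have "Polynomial.coeff p 0 \<noteq> 0" using p0 \<open>p = [:Polynomial.coeff p 0:]\<close> by (metis pCons_0_0)
        ultimately have False using ann w1 POc by (metis scale_eq_0_iff)
        then show ?thesis ..
      next
        case False
        then obtain r where "poly p r = 0" using ac dp False unfolding alg_closed_def by (metis One_nat_def less_one not_le)
        then obtain q where pq: "p = [:-r, 1:] * q" using poly_eq_0_iff_dvd by (metis dvdE)
        have q0: "q \<noteq> 0" using p0 pq by auto
        have "degree p = degree [:-r, 1:] + degree q" unfolding pq by (rule degree_mult_eq) (use q0 in auto)
        then have dq: "degree q < d" using dp by simp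
        show ?thesis
        proof (cases "\<exists>w\<in>V. w \<noteq> 0 \<and> T w = scale r w")
          case True then show ?thesis by blast
        next
          case False
          have "\<forall>w\<in>V. PO q w = 0"
          proof
            fix w assume w: "w \<in> V"
            have "T (PO q w) - scale r (PO q w) = 0" using ann w POlin pq by metis
            then show "PO q w = 0" using False POin[OF w] by auto
          qed
          then show ?thesis using less.IH[OF dq] q0 by blast
        qed
      qed
    qed
  qed
  define p0 :: "'k poly" where "p0 = Polynomial.monom 1 n - [:lam:]"
  have "Polynomial.coeff p0 n = 1" unfolding p0_def using n by (cases n) auto
  then have p0nz: "p0 \<noteq> 0" by auto
  have "PO p0 w = 0" if w: "w \<in> V" for w
  proof -
    have dg: "degree p0 < Suc n"
      unfolding p0_def using degree_diff_le_max[of "Polynomial.monom (1::'k) n" "[:lam:]"] by (simp add: degree_monom_eq)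
    have "PO p0 w = (\<Sum>i<Suc n. scale (Polynomial.coeff p0 i) ((T ^^ i) w))" by (rule bound[OF dg])
    also have "\<dots> = (\<Sum>i<Suc n. (if i = n then (T ^^ i) w else 0)) - (\<Sum>i<Suc n. (if i = 0 then scale lam w else 0))"
      unfolding sum_subtractf[symmetric]
      by (rule sum.cong) (auto simp: p0_def coeff_pCons' scale_left_diff_distrib)
    also have "\<dots> = 0" by (simp add: Tn w)
    finally show ?thesis .
  qed
  then show ?thesis using main[of "degree p0"] p0nz by blast
qed



theorem lemma4p5:
  fixes G :: "('g, 'b) monoid_scheme"
    and \<Phi> :: "'g \<Rightarrow> 'g \<Rightarrow> 'g \<Rightarrow> 'k::field_char_0"
    and gs :: "'g list"
    and scale :: "'k \<Rightarrow> 'v::ab_group_add \<Rightarrow> 'v"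
  assumes "alg_closed TYPE('k)"
    and "comm_group G" and "finite (carrier G)"
    and "normalized_3cocycle G \<Phi>"
    and "set gs \<subseteq> carrier G" and "generate G (set gs) = carrier G"
    and "\<forall>a\<in>set gs. \<forall>b\<in>set gs. \<forall>c\<in>set gs. tPhi G \<Phi> a b c = tPhi G \<Phi> a c b"
    and "vector_space scale"
  shows "abelian_cocycle scale G \<Phi>"
proof -
  note ac = assms(1) and fin = assms(3) and C = assms(4) and gsc = assms(5) and gen = assms(6)
    and symg = assms(7)
  interpret G: comm_group G by (rule assms(2))
  interpret VS: vector_space scale by (rule assms(8))
  have nzP: "\<And>a b c. a \<in> carrier G \<Longrightarrow> b \<in> carrier G \<Longrightarrow> c \<in> carrier G \<Longrightarrow> \<Phi> a b c \<noteq> 0"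
    using C unfolding normalized_3cocycle_def by blast
  have tPnz: "\<And>k x y. k \<in> carrier G \<Longrightarrow> x \<in> carrier G \<Longrightarrow> y \<in> carrier G \<Longrightarrow> tPhi G \<Phi> k x y \<noteq> 0"
    unfolding tPhi_def using nzP by simp
  show ?thesis unfolding abelian_cocycle_def
  proof (intro allI impI)
    fix V Vg act
    assume simple: "yd_simple scale G \<Phi> V Vg act"
    then have obj: "yd_obj scale G \<Phi> V Vg act" and nV: "V \<noteq> {0}"
      and minimal: "\<And>W. yd_subobj scale G V Vg act W \<Longrightarrow> W = {0} \<or> W = V"
      unfolding yd_simple_def by auto
    have sub: "\<And>g. g \<in> carrier G \<Longrightarrow> VS.subspace (Vg g)"
      and Vdef: "V = graded_sum G Vg" and ind: "graded_independent G Vg"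
      and addA: "\<And>e x y. e \<in> carrier G \<Longrightarrow> x \<in> V \<Longrightarrow> y \<in> V \<Longrightarrow> act e (x + y) = act e x + act e y"
      and scA: "\<And>e c x. e \<in> carrier G \<Longrightarrow> x \<in> V \<Longrightarrow> act e (scale c x) = scale c (act e x)"
      and presA: "\<And>e g v. e \<in> carrier G \<Longrightarrow> g \<in> carrier G \<Longrightarrow> v \<in> Vg g \<Longrightarrow> act e v \<in> Vg g"
      and oneA: "\<And>v. v \<in> V \<Longrightarrow> act \<one>\<^bsub>G\<^esub> v = v"
      and relA: "\<And>g e f v. g \<in> carrier G \<Longrightarrow> e \<in> carrier G \<Longrightarrow> f \<in> carrier G \<Longrightarrow> v \<in> Vg g \<Longrightarrow>
          act e (act f v) = scale (tPhi G \<Phi> g e f) (act (e \<otimes>\<^bsub>G\<^esub> f) v)"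
      using obj unfolding yd_obj_def by blast+
    have piece_in: "v \<in> V" if g: "g \<in> carrier G" and v: "v \<in> Vg g" for g v
    proof -
      have "v = (\<Sum>h\<in>carrier G. (if h = g then v else 0))" using g fin by simp
      moreover have "\<forall>h\<in>carrier G. (if h = g then v else 0) \<in> Vg h"
        using v sub VS.subspace_0 by auto
      ultimately show ?thesis unfolding Vdef graded_sum_def by blast
    qed
    have graded: "graded_sum G (\<lambda>h. W \<inter> Vg h) = W"
      if g: "g \<in> carrier G" and sW: "VS.subspace W" and WV: "W \<subseteq> Vg g" for g W
    proof
      show "W \<subseteq> graded_sum G (\<lambda>h. W \<inter> Vg h)"
      proof
        fix w assume w: "w \<in> W"
        have "w = (\<Sum>h\<in>carrier G. (if h = g then w else 0))" using g fin by simp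
        moreover have "\<forall>h\<in>carrier G. (if h = g then w else 0) \<in> W \<inter> Vg h"
          using w WV sub VS.subspace_0 sW by auto
        ultimately show "w \<in> graded_sum G (\<lambda>h. W \<inter> Vg h)" unfolding graded_sum_def by blast
      qed
    next
      show "graded_sum G (\<lambda>h. W \<inter> Vg h) \<subseteq> W"
      proof
        fix u assume "u \<in> graded_sum G (\<lambda>h. W \<inter> Vg h)"
        then obtain f where u: "u = (\<Sum>h\<in>carrier G. f h)" and f: "\<forall>h\<in>carrier G. f h \<in> W \<inter> Vg h"
          unfolding graded_sum_def by blast
        have zero: "f h = 0" if h: "h \<in> carrier G" "h \<noteq> g" for h
        proof -
          define F where "F = (\<lambda>k. if k = h then f h else if k = g then - f h else 0)"
          have "\<forall>k\<in>carrier G. F k \<in> Vg k"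
            unfolding F_def using f h WV sub VS.subspace_0 VS.subspace_neg g by auto
          moreover have "(\<Sum>k\<in>carrier G. F k) = 0"
          proof -
            have "(\<Sum>k\<in>carrier G. F k) = (\<Sum>k\<in>carrier G. (if k = h then f h else 0))
                + (\<Sum>k\<in>carrier G. (if k = g then - f h else 0))"
              unfolding F_def sum.distrib[symmetric] by (rule sum.cong) (use h in auto)
            then show ?thesis using h g fin by simp
          qed
          ultimately have "\<forall>k\<in>carrier G. F k = 0" using ind unfolding graded_independent_def by blast
          then show ?thesis using h unfolding F_def by auto
        qed
        have "u = (\<Sum>h\<in>carrier G. (if h = g then f g else 0))"
          unfolding u by (rule sum.cong) (auto simp: zero)
        then have "u = f g" using g fin by simp
        then show "u \<in> W" using f g by auto
      qed
    qed
    have subobj: "W = {0} \<or> W = V"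
      if g: "g \<in> carrier G" and sW: "VS.subspace W" and WV: "W \<subseteq> Vg g"
        and st: "\<forall>e\<in>carrier G. \<forall>w\<in>W. act e w \<in> W" for g W
    proof (rule minimal)
      show "yd_subobj scale G V Vg act W"
        unfolding yd_subobj_def using sW graded[OF g sW WV] st WV piece_in g by blast
    qed
    obtain g where g: "g \<in> carrier G" and ng: "Vg g \<noteq> {0}"
    proof (rule ccontr)
      assume "\<not> thesis"
      then have all0: "\<forall>h\<in>carrier G. Vg h = {0}" using that by blast
      have "V \<subseteq> {0}"
      proof
        fix v assume "v \<in> V"
        then obtain f where "v = (\<Sum>h\<in>carrier G. f h)" "\<forall>h\<in>carrier G. f h \<in> Vg h"
          unfolding Vdef graded_sum_def by blast
        then show "v \<in> {0}" using all0 by simp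
      qed
      then show False using nV piece_in[OF G.one_closed VS.subspace_0[OF sub[OF G.one_closed]]] by blast
    qed
    have VgV: "Vg g = V"
      using subobj[OF g sub[OF g] order_refl] presA g ng by blast
    have sV: "VS.subspace V" using sub[OF g] VgV by simp
    have actV: "\<And>e v. e \<in> carrier G \<Longrightarrow> v \<in> V \<Longrightarrow> act e v \<in> V"
      using presA g VgV by blast
    have rel: "\<And>e f v. e \<in> carrier G \<Longrightarrow> f \<in> carrier G \<Longrightarrow> v \<in> V \<Longrightarrow>
          act e (act f v) = scale (tPhi G \<Phi> g e f) (act (e \<otimes>\<^bsub>G\<^esub> f) v)"
      using relA g VgV by blast
    have prodstep: "\<forall>w\<in>W. act (e \<otimes>\<^bsub>G\<^esub> f) w \<in> W"
      if sW: "VS.subspace W" and WV: "W \<subseteq> V" and e: "e \<in> carrier G" and f: "f \<in> carrier G"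
        and se: "\<forall>w\<in>W. act e w \<in> W" and sf: "\<forall>w\<in>W. act f w \<in> W" for W e f
    proof
      fix w assume w: "w \<in> W"
      have c: "tPhi G \<Phi> g e f \<noteq> 0" using tPnz g e f by blast
      have "act e (act f w) \<in> W" using se sf w by blast
      then have "scale (inverse (tPhi G \<Phi> g e f)) (act e (act f w)) \<in> W"
        using sW VS.subspace_scale by blast
      also have "scale (inverse (tPhi G \<Phi> g e f)) (act e (act f w)) = act (e \<otimes>\<^bsub>G\<^esub> f) w"
        using rel[OF e f] w WV c by auto
      finally show "act (e \<otimes>\<^bsub>G\<^esub> f) w \<in> W" .
    qed
    have ordpos: "Coset.order G > 0" using fin G.order_gt_0_iff_finite by blast
    have stab: "\<forall>e\<in>carrier G. \<forall>w\<in>W. act e w \<in> W"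
      if sW: "VS.subspace W" and WV: "W \<subseteq> V" and sg: "\<forall>b\<in>set gs. \<forall>w\<in>W. act b w \<in> W" for W
    proof -
      have "\<forall>w\<in>W. act e w \<in> W" if "e \<in> generate G (set gs)" for e
        using that
      proof (induction e rule: generate.induct)
        case one
        then show ?case using oneA WV by auto
      next
        case (incl h)
        then show ?case using sg by blast
      next
        case (inv h)
        have hc: "h \<in> carrier G" using inv gsc by auto
        have pw: "\<forall>w\<in>W. act (h [^]\<^bsub>G\<^esub> k) w \<in> W" for k :: nat
        proof (induction k)
          case 0
          then show ?case using oneA WV by auto
        next
          case (Suc k)
          then show ?case using prodstep[OF sW WV _ hc] sg inv hc by simp
        qed
        have "h [^]\<^bsub>G\<^esub> (Coset.order G - 1) \<otimes>\<^bsub>G\<^esub> h = \<one>\<^bsub>G\<^esub>"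
          using G.pow_order_eq_1[OF hc] ordpos hc
          by (metis G.nat_pow_Suc Suc_diff_1)
        then have "inv\<^bsub>G\<^esub> h = h [^]\<^bsub>G\<^esub> (Coset.order G - 1)"
          using hc by (metis G.inv_equality G.nat_pow_closed)
        then show ?case using pw by simp
      next
        case (eng h1 h2)
        have "h1 \<in> carrier G" "h2 \<in> carrier G" using eng.hyps gen by auto
        then show ?case using prodstep[OF sW WV] eng.IH by blast
      qed
      then show ?thesis using gen by blast
    qed
    have symgg: "tPhi G \<Phi> g a b = tPhi G \<Phi> g b a" if "a \<in> set gs" "b \<in> set gs" for a b
      using G.omega_gen[OF C gsc symg _ that] g gen by blast
    have comm: "act a (act b w) = act b (act a w)" if a: "a \<in> set gs" and b: "b \<in> set gs" and w: "w \<in> V" for a b w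
    proof -
      have ac': "a \<in> carrier G" "b \<in> carrier G" using a b gsc by auto
      then show ?thesis using rel[OF ac' w] rel[OF ac'(2) ac'(1) w] symgg[OF a b] G.m_comm[OF ac'] by simp
    qed
    have scalar: "\<exists>r. \<forall>w\<in>V. act a w = scale r w" if a: "a \<in> set gs" for a
    proof -
      have acar: "a \<in> carrier G" using a gsc by auto
      have pw: "\<exists>c. \<forall>w\<in>V. (act a ^^ k) w = scale c (act (a [^]\<^bsub>G\<^esub> k) w)" for k
      proof (induction k)
        case 0
        then show ?case using oneA by (intro exI[of _ 1]) simp
      next
        case (Suc k)
        then obtain c where c: "\<forall>w\<in>V. (act a ^^ k) w = scale c (act (a [^]\<^bsub>G\<^esub> k) w)" by blast
        have "(act a ^^ Suc k) w = scale (c * tPhi G \<Phi> g a (a [^]\<^bsub>G\<^esub> k)) (act (a [^]\<^bsub>G\<^esub> Suc k) w)"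
          if w: "w \<in> V" for w
        proof -
          have pc: "a [^]\<^bsub>G\<^esub> k \<in> carrier G" using acar by simp
          have "(act a ^^ Suc k) w = act a (scale c (act (a [^]\<^bsub>G\<^esub> k) w))" using c w by simp
          also have "\<dots> = scale c (act a (act (a [^]\<^bsub>G\<^esub> k) w))"
            using scA[OF acar actV[OF pc w]] .
          also have "\<dots> = scale c (scale (tPhi G \<Phi> g a (a [^]\<^bsub>G\<^esub> k)) (act (a \<otimes>\<^bsub>G\<^esub> a [^]\<^bsub>G\<^esub> k) w))"
            using rel[OF acar pc w] by simp
          also have "a \<otimes>\<^bsub>G\<^esub> a [^]\<^bsub>G\<^esub> k = a [^]\<^bsub>G\<^esub> Suc k"
            using acar pc by (simp add: G.m_comm)
          finally show ?thesis by simp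
        qed
        then show ?case by blast
      qed
      obtain lam where lam: "\<forall>w\<in>V. (act a ^^ Coset.order G) w = scale lam (act (a [^]\<^bsub>G\<^esub> Coset.order G) w)"
        using pw by blast
      have Tn: "(act a ^^ Coset.order G) w = scale lam w" if "w \<in> V" for w
        using lam that G.pow_order_eq_1[OF acar] oneA by simp
      obtain r w0 where w0: "w0 \<in> V" "w0 \<noteq> 0" and ev: "act a w0 = scale r w0"
        using eigen_exists[OF ac assms(8) sV nV actV[OF acar] addA[OF acar] scA[OF acar] _ Tn] ordpos
        by (metis One_nat_def Suc_leI)
      define K where "K = {w \<in> V. act a w = scale r w}"
      have z: "0 \<in> V" using sV VS.subspace_0 by blast
      have a0: "act a 0 = 0" using addA[OF acar z z] by simp
      have sK: "VS.subspace K"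
        unfolding K_def VS.subspace_def
        using z a0 VS.subspace_add[OF sV] VS.subspace_scale[OF sV] addA[OF acar] scA[OF acar]
        by (auto simp: VS.scale_right_distrib VS.scale_left_commute)
      have KV: "K \<subseteq> V" unfolding K_def by auto
      have sgK: "\<forall>b\<in>set gs. \<forall>w\<in>K. act b w \<in> K"
      proof (intro ballI)
        fix b w assume b: "b \<in> set gs" and w: "w \<in> K"
        have bc: "b \<in> carrier G" using b gsc by auto
        have wV: "w \<in> V" and aw: "act a w = scale r w" using w unfolding K_def by auto
        have "act a (act b w) = scale r (act b w)"
          using comm[OF a b wV] aw scA[OF bc wV] by simp
        then show "act b w \<in> K" unfolding K_def using actV[OF bc wV] by simp
      qed
      have "K = {0} \<or> K = V"
        using subobj[OF g sK] KV VgV stab[OF sK KV sgK] by blast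
      moreover have "w0 \<in> K" using w0 ev unfolding K_def by simp
      ultimately have "K = V" using w0 by blast
      then show ?thesis unfolding K_def by blast
    qed
    obtain v0 where v0: "v0 \<in> V" "v0 \<noteq> 0" using nV sV VS.subspace_0 by blast
    define L where "L = VS.span {v0}"
    have Lr: "L = range (\<lambda>c. scale c v0)" unfolding L_def by (rule VS.span_singleton)
    have sL: "VS.subspace L" unfolding L_def by simp
    have LV: "L \<subseteq> V" unfolding Lr using v0 VS.subspace_scale[OF sV] by blast
    have sgL: "\<forall>b\<in>set gs. \<forall>w\<in>L. act b w \<in> L"
    proof (intro ballI)
      fix b w assume b: "b \<in> set gs" and w: "w \<in> L"
      obtain r where r: "\<forall>w\<in>V. act b w = scale r w" using scalar[OF b] by blast
      have "w \<in> V" using w LV by blast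
      then have "act b w = scale r w" using r by blast
      then show "act b w \<in> L" using w sL VS.subspace_scale by simp
    qed
    have "L = {0} \<or> L = V"
      using subobj[OF g sL] LV VgV stab[OF sL LV sgL] by blast
    moreover have "v0 \<in> L" unfolding L_def by (simp add: VS.span_base)
    ultimately have LV': "L = V" using v0 by blast
    have "VS.independent {v0}" using v0 by simp
    then have "VS.dim (VS.span {v0}) = card {v0}" by (rule VS.dim_span_eq_card_independent)
    then show "VS.dim V = 1" using LV' unfolding L_def by simp
  qed
qed

end
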